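(* Let $p,q$ be distinct positive integers and $n\ge1$. For every nonempty finite sequence $s$ of elements of $\{p,q\}$, the map $\{p,q\}^n\to\{p,q\}^n$, $x\mapsto A^{p,q}_n(x,s)$, is a bijection (i.e. $A^{p,q}_n$ is a permutation automaton).
   Context: Let $p,q$ be distinct positive integers. Define $\mathrm{Opp}(p)=q$, $\mathrm{Opp}(q)=p$. For $x\in\{p,q\}$ and a finite sequence $s=(s_1,\dots,s_m)$ of positive integers, $RLD^{p,q}(x,s)$ is the sequence over $\{p,q\}$ consisting of $s_1$ copies of $x$, then $s_2$ copies of $\mathrm{Opp}(x)$, then $s_3$ copies of $x$, and so on alternately. For $n\ge1$ and $x=(x_1,\dots,x_n)\in\{p,q\}^n$: $RLD^{p,q}_1(x_1,s)=RLD^{p,q}(x_1,s)$ and $RLD^{p,q}_n(x_{1:n},s)=RLD^{p,q}(x_n, RLD^{p,q}_{n-1}(x_{1:n-1},s))$. For a nonempty sequence $t$ over $\{p,q\}$, $\mathrm{OppEnd}(t)=\mathrm{Opp}(\text{last entry of } t)$. The automaton $A^{p,q}_n$ has state set $\{p,q\}^n$; for a state $x$ and a nonempty finite sequence $s$ over $\{p,q\}$, $A^{p,q}_n(x,s)$ is the state whose $i$-th coordinate is $\mathrm{OppEnd}(RLD^{p,q}_i(x_{1:i},s))$, $i=1,\dots,n$. *)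

theory Defs
  imports Main
begin

definition Opp :: "nat \<Rightarrow> nat \<Rightarrow> nat \<Rightarrow> nat" where
  "Opp p q x = (if x = p then q else p)"

definition RLD :: "nat \<Rightarrow> nat \<Rightarrow> nat \<Rightarrow> nat list \<Rightarrow> nat list" where
  "RLD p q x s = concat (map (\<lambda>i. replicate (s ! i) (if even i then x else Opp p q x)) [0..<length s])"

definition RLDn :: "nat \<Rightarrow> nat \<Rightarrow> nat list \<Rightarrow> nat list \<Rightarrow> nat list" where
  "RLDn p q xs s = foldl (\<lambda>t x. RLD p q x t) s xs"

definition OppEnd :: "nat \<Rightarrow> nat \<Rightarrow> nat list \<Rightarrow> nat" where
  "OppEnd p q t = Opp p q (last t)"

definition Aut :: "nat \<Rightarrow> nat \<Rightarrow> nat \<Rightarrow> nat list \<Rightarrow> nat list \<Rightarrow> nat list" where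
  "Aut p q n x s = map (\<lambda>i. OppEnd p q (RLDn p q (take (Suc i) x) s)) [0..<n]"

definition states :: "nat \<Rightarrow> nat \<Rightarrow> nat \<Rightarrow> nat list set" where
  "states p q n = {x. length x = n \<and> set x \<subseteq> {p, q}}"

end

theory Submission
  imports Defs
begin

lemma RLD_snoc:
  "RLD p q a (t @ [c]) = RLD p q a t @ replicate c (if even (length t) then a else Opp p q a)"
proof -
  have m: "map (\<lambda>i. replicate ((t @ [c]) ! i) (if even i then a else Opp p q a)) [0..<length t]
      = map (\<lambda>i. replicate (t ! i) (if even i then a else Opp p q a)) [0..<length t]"
    by (auto simp: nth_append)
  show ?thesis unfolding RLD_def length_append_singleton upt_Suc_append[OF le0] map_append m
    by simp
qed

lemma RLD_length: "length (RLD p q a t) = sum_list t"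
  by (induction t rule: rev_induct) (auto simp: RLD_snoc, simp add: RLD_def)

lemma RLD_set: "a \<in> {p,q} \<Longrightarrow> set (RLD p q a t) \<subseteq> {p,q}"
  by (induction t rule: rev_induct) (auto simp: RLD_snoc Opp_def, auto simp: RLD_def)

lemma RLD_last:
  assumes "t \<noteq> []" "\<forall>c\<in>set t. c > 0"
  shows "last (RLD p q a t) = (if odd (length t) then a else Opp p q a)"
proof -
  obtain u c where t: "t = u @ [c]" using assms(1) by (metis rev_exhaust)
  have "c > 0" using assms t by auto
  then show ?thesis unfolding t RLD_snoc by (cases c) auto
qed

lemma RLDn_snoc: "RLDn p q (xs @ [a]) s = RLD p q a (RLDn p q xs s)"
  by (simp add: RLDn_def)

lemma RLDn_props:
  assumes "s \<noteq> []" "set s \<subseteq> {p,q}" "0 < p" "0 < q" "set xs \<subseteq> {p,q}"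
  shows "RLDn p q xs s \<noteq> [] \<and> set (RLDn p q xs s) \<subseteq> {p,q}"
  using assms(5)
proof (induction xs rule: rev_induct)
  case Nil
  then show ?case using assms by (simp add: RLDn_def)
next
  case (snoc a xs)
  let ?t = "RLDn p q xs s"
  have h: "?t \<noteq> []" "set ?t \<subseteq> {p,q}" using snoc by auto
  have "sum_list ?t > 0"
  proof -
    obtain c u where "?t = c # u" using h(1) by (cases ?t) auto
    moreover have "c > 0" using h(2) assms calculation by auto
    ultimately show ?thesis by simp
  qed
  then have "RLD p q a ?t \<noteq> []" by (metis RLD_length length_0_conv less_irrefl)
  moreover have "set (RLD p q a ?t) \<subseteq> {p,q}" using snoc by (intro RLD_set) auto
  ultimately show ?case by (simp add: RLDn_snoc)
qed

lemma Aut_snoc: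
  assumes "length xs = n"
  shows "Aut p q (Suc n) (xs @ [a]) s = Aut p q n xs s @ [OppEnd p q (RLD p q a (RLDn p q xs s))]"
proof -
  have "map (\<lambda>i. OppEnd p q (RLDn p q (take (Suc i) (xs @ [a])) s)) [0..<n]
      = map (\<lambda>i. OppEnd p q (RLDn p q (take (Suc i) xs) s)) [0..<n]"
    using assms by auto
  moreover have "take (Suc n) (xs @ [a]) = xs @ [a]" using assms by simp
  ultimately show ?thesis unfolding Aut_def by (simp add: RLDn_snoc)
qed

lemma Aut_len: "length (Aut p q n x s) = n"
  by (simp add: Aut_def)

lemma Aut_set: "set (Aut p q n x s) \<subseteq> {p,q}"
  by (auto simp: Aut_def OppEnd_def Opp_def)

lemma Opp_inj: "a \<in> {p,q} \<Longrightarrow> b \<in> {p,q} \<Longrightarrow> p \<noteq> q \<Longrightarrow> Opp p q a = Opp p q b \<Longrightarrow> a = b"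
  unfolding Opp_def by (auto split: if_splits)

lemma Opp_mem: "Opp p q a \<in> {p,q}"
  unfolding Opp_def by simp

lemma Aut_inj:
  assumes "s \<noteq> []" "set s \<subseteq> {p,q}" "0 < p" "0 < q" "p \<noteq> q"
  shows "x \<in> states p q n \<Longrightarrow> y \<in> states p q n \<Longrightarrow> Aut p q n x s = Aut p q n y s \<Longrightarrow> x = y"
proof (induction n arbitrary: x y)
  case 0
  then show ?case by (simp add: states_def)
next
  case (Suc n)
  obtain x' a where x: "x = x' @ [a]" using Suc.prems(1) unfolding states_def
    by (cases x rule: rev_cases) auto
  obtain y' b where y: "y = y' @ [b]" using Suc.prems(2) unfolding states_def
    by (cases y rule: rev_cases) auto
  have lx: "length x' = n" "set x' \<subseteq> {p,q}" "a \<in> {p,q}" using Suc.prems(1) unfolding x states_def by auto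
  have ly: "length y' = n" "set y' \<subseteq> {p,q}" "b \<in> {p,q}" using Suc.prems(2) unfolding y states_def by auto
  have eq: "Aut p q n x' s @ [OppEnd p q (RLD p q a (RLDn p q x' s))]
      = Aut p q n y' s @ [OppEnd p q (RLD p q b (RLDn p q y' s))]"
    using Suc.prems(3) unfolding x y Aut_snoc[OF lx(1)] Aut_snoc[OF ly(1)] .
  have e1: "Aut p q n x' s = Aut p q n y' s" and e2: "OppEnd p q (RLD p q a (RLDn p q x' s)) = OppEnd p q (RLD p q b (RLDn p q y' s))"
    using eq by simp_all
  have "x' \<in> states p q n" "y' \<in> states p q n" using lx ly unfolding states_def by simp_all
  then have "x' = y'" using Suc.IH e1 by blast
  let ?t = "RLDn p q x' s"
  have P: "?t \<noteq> []" "set ?t \<subseteq> {p,q}" using RLDn_props[OF assms(1-4) lx(2)] by auto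
  have pos: "\<forall>c\<in>set ?t. c > 0" using P(2) assms(3,4) by auto
  have e3: "Opp p q (if odd (length ?t) then a else Opp p q a) = Opp p q (if odd (length ?t) then b else Opp p q b)"
    using e2 unfolding \<open>x' = y'\<close>[symmetric] OppEnd_def RLD_last[OF P(1) pos] .
  have "a = b"
  proof (cases "odd (length ?t)")
    case True
    then show ?thesis using e3 Opp_inj[OF lx(3) ly(3) assms(5)] by simp
  next
    case False
    then have "Opp p q a = Opp p q b" using e3 Opp_inj[OF Opp_mem Opp_mem assms(5)] by simp
    then show ?thesis using Opp_inj[OF lx(3) ly(3) assms(5)] by simp
  qed
  then show ?case using x y \<open>x' = y'\<close> by simp
qed

theorem lemma1:
  fixes p q n :: nat and s :: "nat list"
  assumes "0 < p" and "0 < q" and "p \<noteq> q" and "1 \<le> n"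
    and "s \<noteq> []" and "set s \<subseteq> {p, q}"
  shows "bij_betw (\<lambda>x. Aut p q n x s) (states p q n) (states p q n)"
proof -
  have fin: "finite (states p q n)"
  proof -
    have "states p q n \<subseteq> {xs. set xs \<subseteq> {p,q} \<and> length xs = n}" by (auto simp: states_def)
    moreover have "finite {xs. set xs \<subseteq> {p,q} \<and> length xs = n}"
      by (rule finite_lists_length_eq) simp
    ultimately show ?thesis by (rule finite_subset)
  qed
  have sub: "(\<lambda>x. Aut p q n x s) ` states p q n \<subseteq> states p q n"
    unfolding states_def using Aut_len Aut_set by blast
  have inj: "inj_on (\<lambda>x. Aut p q n x s) (states p q n)"
    using Aut_inj[OF assms(5,6,1,2,3)] by (auto simp: inj_on_def)
  show ?thesis using endo_inj_surj[OF fin sub inj] inj by (simp add: bij_betw_def)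
qed

end
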